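(* Let $p,q,r$ be integers with $1<p<q<r$, $p$ odd and $pq+pr-qr=1$, and let $n_p=(p-1)/2$. Then $D(p,q,r)=p-1$ if and only if $q-p\ge n_p$.
   Context: $t_{p,q}$, $\alpha_{p,q}$ are the quotient and remainder of $n_p$ divided by $q-p$ ($n_p=t_{p,q}(q-p)+\alpha_{p,q}$, $0\le\alpha_{p,q}<q-p$), and $D(p,q,r)=(t_{p,q}+1)(n_p+\alpha_{p,q})$. *)

theory Defs
  imports Main
begin

definition n_p :: "int \<Rightarrow> int" where
  "n_p p = (p - 1) div 2"

definition t_pq :: "int \<Rightarrow> int \<Rightarrow> int" where
  "t_pq p q = n_p p div (q - p)"

definition alpha_pq :: "int \<Rightarrow> int \<Rightarrow> int" where
  "alpha_pq p q = n_p p mod (q - p)"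

(* r does not enter the formula; kept as argument as in the paper *)
definition D :: "int \<Rightarrow> int \<Rightarrow> int \<Rightarrow> int" where
  "D p q r = (t_pq p q + 1) * (n_p p + alpha_pq p q)"

end

theory Submission
  imports Defs
begin

theorem proposition4p3:
  fixes p q r :: int
  assumes "1 < p" "p < q" "q < r" "odd p" "p * q + p * r - q * r = 1"
  shows "D p q r = p - 1 \<longleftrightarrow> q - p \<ge> n_p p"
proof -
  define d where "d = q - p"
  define n where "n = n_p p"
  define t where "t = n div d"
  define a where "a = n mod d"
  have d0: "d > 0" using assms d_def by simp
  have pn: "p = 2 * n + 1" using assms(4) unfolding n_def n_p_def by (elim oddE) simp
  have n1: "n \<ge> 1" using pn assms(1) by simp
  have na: "n = t * d + a" unfolding t_def a_def by simp
  have a0: "0 \<le> a" "a < d" unfolding a_def using d0 by simp_all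
  have t0: "t \<ge> 0" unfolding t_def using n1 d0 by (simp add: div_int_pos_iff)
  have DD: "D p q r = (t + 1) * (n + a)"
    unfolding D_def t_pq_def alpha_pq_def t_def a_def n_def d_def by simp
  have red: "?thesis \<longleftrightarrow> (D p q r = 2 * n \<longleftrightarrow> d \<ge> n)"
    using pn unfolding d_def n_def by (metis add_diff_cancel_right')
  have "D p q r = 2 * n \<longleftrightarrow> d \<ge> n"
  proof (cases "d \<ge> n")
    case True
    show ?thesis
    proof (cases "d = n")
      case True
      then have "t = 1" "a = 0" unfolding t_def a_def using n1 by simp_all
      then show ?thesis using DD True by simp
    next
      case False
      then have "t = 0" "a = n" unfolding t_def a_def using n1 \<open>d \<ge> n\<close> by (simp_all add: div_pos_pos_trivial mod_pos_pos_trivial)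
      then show ?thesis using DD \<open>d \<ge> n\<close> by simp
    qed
  next
    case False
    have t1: "t \<ge> 1"
    proof (rule ccontr)
      assume "\<not> t \<ge> 1" then have "t = 0" using t0 by simp
      then show False using na a0 False by simp
    qed
    have "D p q r \<noteq> 2 * n"
    proof (cases "t = 1")
      case True
      then have "a > 0" using na False by simp
      then have "D p q r = 2 * (n + a)" using DD True by simp
      then show ?thesis using \<open>a > 0\<close> by simp
    next
      case f: False
      then have "t + 1 \<ge> 3" using t1 by simp
      then have "(t + 1) * (n + a) \<ge> 3 * (n + a)" using a0 n1 by (intro mult_right_mono) simp_all
      then have "D p q r \<ge> 3 * (n + a)" using DD by simp
      moreover have "3 * (n + a) > 2 * n" using a0 n1 by simp
      ultimately have "D p q r > 2 * n" by linarith
      then show ?thesis by simp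
    qed
    then show ?thesis using False by simp
  qed
  then show ?thesis using red by simp
qed

end
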